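(* Let $\mathcal B=(B_1,\dots,B_d)$ and $\mathcal B'=(B'_1,\dots,B'_{d+1})$ be splittings of $B_J\in\mathbb R^{n\times n}$ of orders $d$ and $d+1$. Suppose there are integers $0\le r\le d-1$, $0\le s\le d$ such that, writing $(C_1,\dots,C_d)=\mathcal S^r(\mathcal B)$ and $(C'_1,\dots,C'_{d+1})=\mathcal S^s(\mathcal B')$, we have (I) $C'_p=C_p$ for $p=1,\dots,d-1$; (II) $(C'_d,C'_{d+1})$ is a splitting of $C_d$; and moreover $C'_{d+1}C'_d=O$. Then $T(\mathcal B)$ and $T(\mathcal B')$ have the same nonzero eigenvalues.
   Context: For $B\in\mathbb R^{n\times n}$, a splitting of $B$ of order $d\ge1$ is an ordered $d$-tuple $\mathcal B=(B_1,\dots,B_d)$ of real $n\times n$ matrices with $B_p\neq O$ for all $p$, $\sum_{p=1}^d B_p=B$, and $B_p\circ B_q=O$ (Hadamard product) for $p\ne q$. The iteration matrix of $\mathcal B$ is the $dn\times dn$ matrix $T(\mathcal B)=(I_{dn}-\mathcal L)^{-1}\mathcal U$, where $\mathcal L,\mathcal U$ are $d\times d$ block matrices with $n\times n$ blocks, $\mathcal L_{ij}=B_j$ if $i>j$ and $O$ otherwise, $\mathcal U_{ij}=B_j$ if $i\le j$ and $O$ otherwise. The cyclic shift is $\mathcal S(B_1,\dots,B_d)=(B_d,B_1,\dots,B_{d-1})$ and $\mathcal S^r$ is its $r$-fold iterate. *)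

theory Defs
  imports "Jordan_Normal_Form.Gauss_Jordan_Elimination" "Jordan_Normal_Form.Char_Poly"
begin

definition is_splitting :: "nat \<Rightarrow> real mat \<Rightarrow> real mat list \<Rightarrow> bool" where
  "is_splitting n B Bs \<longleftrightarrow>
     length Bs \<ge> 1 \<and> B \<in> carrier_mat n n \<and>
     (\<forall>p < length Bs. Bs ! p \<in> carrier_mat n n \<and> Bs ! p \<noteq> 0\<^sub>m n n) \<and>
     B = mat n n (\<lambda>ij. \<Sum>p < length Bs. Bs ! p $$ ij) \<and>
     (\<forall>p < length Bs. \<forall>q < length Bs. p \<noteq> q \<longrightarrow>
        (\<forall>i < n. \<forall>j < n. Bs ! p $$ (i, j) * Bs ! q $$ (i, j) = 0))"

(* block matrix L: block (i,j) is B_j if i > j, else O  (0-based block indices) *)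
definition block_L :: "nat \<Rightarrow> real mat list \<Rightarrow> real mat" where
  "block_L n Bs = mat (length Bs * n) (length Bs * n)
     (\<lambda>(i, j). if i div n > j div n then Bs ! (j div n) $$ (i mod n, j mod n) else 0)"

(* block matrix U: block (i,j) is B_j if i \<le> j, else O *)
definition block_U :: "nat \<Rightarrow> real mat list \<Rightarrow> real mat" where
  "block_U n Bs = mat (length Bs * n) (length Bs * n)
     (\<lambda>(i, j). if i div n \<le> j div n then Bs ! (j div n) $$ (i mod n, j mod n) else 0)"

definition iter_mat :: "nat \<Rightarrow> real mat list \<Rightarrow> real mat" where
  "iter_mat n Bs = the (mat_inverse (1\<^sub>m (length Bs * n) - block_L n Bs)) * block_U n Bs"

definition cshift :: "'a list \<Rightarrow> 'a list" where
  "cshift xs = last xs # butlast xs"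

definition nonzero_eigenvalues :: "real mat \<Rightarrow> complex set" where
  "nonzero_eigenvalues A = {k. k \<noteq> 0 \<and> eigenvalue (map_mat complex_of_real A) k}"

end

theory Submission
  imports Defs
begin

definition Mv :: "(nat \<Rightarrow> nat \<Rightarrow> nat \<Rightarrow> complex) \<Rightarrow> nat \<Rightarrow> nat \<Rightarrow> (nat \<Rightarrow> complex) \<Rightarrow> nat \<Rightarrow> complex" where
  "Mv G n j f a = (\<Sum>b<n. G j a b * f b)"

fun yseq :: "(nat \<Rightarrow> nat \<Rightarrow> nat \<Rightarrow> complex) \<Rightarrow> nat \<Rightarrow> complex \<Rightarrow> (nat \<Rightarrow> complex) \<Rightarrow> nat \<Rightarrow> nat \<Rightarrow> complex" where
  "yseq G n \<mu> w 0 = w"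
| "yseq G n \<mu> w (Suc j) = (\<lambda>a. yseq G n \<mu> w j a + \<mu> * Mv G n j (yseq G n \<mu> w j) a)"

definition sysz :: "(nat \<Rightarrow> nat \<Rightarrow> nat \<Rightarrow> complex) \<Rightarrow> nat \<Rightarrow> nat \<Rightarrow> complex \<Rightarrow> (nat \<Rightarrow> nat \<Rightarrow> complex) \<Rightarrow> nat \<Rightarrow> nat \<Rightarrow> complex" where
  "sysz G n d l x i a = (\<Sum>j<d. (if j < i then l else 1) * Mv G n j (x j) a)"

lemma Mv_cong: "(\<And>b. b < n \<Longrightarrow> f b = g b) \<Longrightarrow> Mv G n j f a = Mv G n j g a"
  unfolding Mv_def by (auto intro: sum.cong)

lemma Mv_smult: "Mv G n j (\<lambda>b. c * f b) a = c * Mv G n j f a"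
  unfolding Mv_def by (simp add: sum_distrib_left algebra_simps)

lemma Mv_zero: "Mv G n j (\<lambda>b. 0) a = 0"
  unfolding Mv_def by simp

lemma sysz_Suc: assumes "i < d"
  shows "sysz G n d l x (Suc i) a = sysz G n d l x i a + (l - 1) * Mv G n i (x i) a"
proof -
  have "sysz G n d l x (Suc i) a - sysz G n d l x i a
     = (\<Sum>j<d. ((if j < Suc i then l else 1) - (if j < i then l else 1)) * Mv G n j (x j) a)"
    unfolding sysz_def by (simp add: sum_subtractf algebra_simps)
  also have "\<dots> = (\<Sum>j<d. if j = i then (l - 1) * Mv G n j (x j) a else 0)"
    by (rule sum.cong) auto
  also have "\<dots> = (l - 1) * Mv G n i (x i) a" using assms by simp
  finally show ?thesis by (simp add: algebra_simps)
qed

lemma yseq_zero: "(\<And>a. a < n \<Longrightarrow> w a = 0) \<Longrightarrow> a < n \<Longrightarrow> yseq G n \<mu> w i a = 0"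
proof (induction i arbitrary: a)
  case 0 then show ?case by simp
next
  case (Suc i)
  have "Mv G n i (yseq G n \<mu> w i) a = Mv G n i (\<lambda>b. 0) a"
    by (rule Mv_cong) (use Suc in auto)
  then show ?case using Suc by (simp add: Mv_zero)
qed

lemma lemmaB:
  assumes l: "l \<noteq> 0" and d: "d \<ge> 1" and mu: "\<mu> = (l - 1) / l"
  shows "(\<exists>x. (\<exists>i<d. \<exists>a<n. x i a \<noteq> 0) \<and> (\<forall>i<d. \<forall>a<n. l * x i a = sysz G n d l x i a))
     \<longleftrightarrow> (\<exists>w. (\<exists>a<n. w a \<noteq> 0) \<and> (\<forall>a<n. (\<Sum>j<d. Mv G n j (yseq G n \<mu> w j) a) = l * w a))"
proof
  assume "\<exists>x. (\<exists>i<d. \<exists>a<n. x i a \<noteq> 0) \<and> (\<forall>i<d. \<forall>a<n. l * x i a = sysz G n d l x i a)"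
  then obtain x where nz: "\<exists>i<d. \<exists>a<n. x i a \<noteq> 0"
    and sy: "\<And>i a. i < d \<Longrightarrow> a < n \<Longrightarrow> l * x i a = sysz G n d l x i a" by blast
  define w where "w = sysz G n d l x 0"
  have yz: "i \<le> d \<Longrightarrow> a < n \<Longrightarrow> yseq G n \<mu> w i a = sysz G n d l x i a" for i a
  proof (induction i arbitrary: a)
    case 0 then show ?case by (simp add: w_def)
  next
    case (Suc i)
    have "Mv G n i (yseq G n \<mu> w i) a = Mv G n i (\<lambda>b. l * x i b) a"
      by (rule Mv_cong) (use Suc sy in auto)
    also have "\<dots> = l * Mv G n i (x i) a" by (rule Mv_smult)
    finally have "yseq G n \<mu> w (Suc i) a = sysz G n d l x i a + \<mu> * l * Mv G n i (x i) a"
      using Suc by simp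
    also have "\<mu> * l = l - 1" using mu l by simp
    finally show ?case using sysz_Suc[of i d] Suc by simp
  qed
  show "\<exists>w. (\<exists>a<n. w a \<noteq> 0) \<and> (\<forall>a<n. (\<Sum>j<d. Mv G n j (yseq G n \<mu> w j) a) = l * w a)"
  proof (rule exI[of _ w], intro conjI allI impI)
    show "\<exists>a<n. w a \<noteq> 0"
    proof (rule ccontr)
      assume "\<not> (\<exists>a<n. w a \<noteq> 0)"
      then have "i < d \<Longrightarrow> a < n \<Longrightarrow> x i a = 0" for i a
        using yseq_zero[where n=n and w=w and G=G and \<mu>=\<mu>] yz[of i a] sy[of i a] l by auto
      with nz show False by blast
    qed
    fix a assume a: "a < n"
    have "(\<Sum>j<d. Mv G n j (yseq G n \<mu> w j) a) = (\<Sum>j<d. l * Mv G n j (x j) a)"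
    proof (rule sum.cong)
      fix j assume "j \<in> {..<d}"
      then have "Mv G n j (yseq G n \<mu> w j) a = Mv G n j (\<lambda>b. l * x j b) a"
        by (intro Mv_cong) (use yz sy in auto)
      then show "Mv G n j (yseq G n \<mu> w j) a = l * Mv G n j (x j) a" by (simp add: Mv_smult)
    qed simp
    also have "\<dots> = l * w a" by (simp add: w_def sysz_def sum_distrib_left)
    finally show "(\<Sum>j<d. Mv G n j (yseq G n \<mu> w j) a) = l * w a" .
  qed
next
  assume "\<exists>w. (\<exists>a<n. w a \<noteq> 0) \<and> (\<forall>a<n. (\<Sum>j<d. Mv G n j (yseq G n \<mu> w j) a) = l * w a)"
  then obtain w where nz: "\<exists>a<n. w a \<noteq> 0"
    and cw: "\<And>a. a < n \<Longrightarrow> (\<Sum>j<d. Mv G n j (yseq G n \<mu> w j) a) = l * w a" by blast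
  define x where "x = (\<lambda>i a. yseq G n \<mu> w i a / l)"
  have xs: "Mv G n j (x j) a = Mv G n j (yseq G n \<mu> w j) a / l" for j a
    unfolding x_def Mv_def by (simp add: sum_divide_distrib)
  have key: "i \<le> d \<Longrightarrow> a < n \<Longrightarrow> sysz G n d l x i a = yseq G n \<mu> w i a" for i a
  proof (induction i arbitrary: a)
    case 0
    have "sysz G n d l x 0 a = (\<Sum>j<d. Mv G n j (yseq G n \<mu> w j) a) / l"
      by (simp add: sysz_def xs sum_divide_distrib)
    then show ?case using cw[OF 0(2)] l by simp
  next
    case (Suc i)
    then have "sysz G n d l x (Suc i) a = yseq G n \<mu> w i a + (l - 1) * (Mv G n i (yseq G n \<mu> w i) a / l)"
      using sysz_Suc[of i d G n l x a] xs by simp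
    then show ?case using mu by simp
  qed
  show "\<exists>x. (\<exists>i<d. \<exists>a<n. x i a \<noteq> 0) \<and> (\<forall>i<d. \<forall>a<n. l * x i a = sysz G n d l x i a)"
  proof (rule exI[of _ x], intro conjI allI impI)
    obtain a where "a < n" "w a \<noteq> 0" using nz by blast
    then show "\<exists>i<d. \<exists>a<n. x i a \<noteq> 0" using d l
      by (intro exI[of _ 0] conjI exI[of _ a]) (auto simp: x_def)
    fix i a assume "i < d" "a < n"
    then show "l * x i a = sysz G n d l x i a" using key[of i a] l by (simp add: x_def)
  qed
qed

lemma yseq_tele: "a < n \<Longrightarrow> yseq G n \<mu> w d a = w a + \<mu> * (\<Sum>j<d. Mv G n j (yseq G n \<mu> w j) a)"
  by (induction d) (simp_all add: algebra_simps)

lemma lemmaC: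
  assumes l: "l \<noteq> 0" "l \<noteq> 1" and mu: "\<mu> = (l - 1) / l" and a: "a < n"
  shows "(\<Sum>j<d. Mv G n j (yseq G n \<mu> w j) a) = l * w a \<longleftrightarrow> yseq G n \<mu> w d a = l * w a"
proof -
  have "\<mu> \<noteq> 0" using l mu by simp
  have e: "\<mu> * l = l - 1" using mu l by simp
  define S where "S = (\<Sum>j<d. Mv G n j (yseq G n \<mu> w j) a)"
  have "w a + \<mu> * S = l * w a \<longleftrightarrow> \<mu> * S = (l - 1) * w a"
    by (auto simp: algebra_simps)
  also have "\<dots> \<longleftrightarrow> \<mu> * S = \<mu> * (l * w a)"
    by (simp add: e[symmetric] mult.assoc)
  also have "\<dots> \<longleftrightarrow> S = l * w a" using \<open>\<mu> \<noteq> 0\<close> by simp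
  finally show ?thesis unfolding yseq_tele[OF a] S_def by simp
qed

lemma yseq_one: "yseq G n 0 w j = w"
  by (induction j) auto

definition prodP :: "nat \<Rightarrow> complex \<Rightarrow> complex mat list \<Rightarrow> complex mat" where
  "prodP n \<mu> xs = foldl (\<lambda>M b. (1\<^sub>m n + \<mu> \<cdot>\<^sub>m b) * M) (1\<^sub>m n) xs"

lemma foldl_carrier: "set xs \<subseteq> carrier_mat n n \<Longrightarrow> M \<in> carrier_mat n n \<Longrightarrow>
   foldl (\<lambda>M b. (1\<^sub>m n + \<mu> \<cdot>\<^sub>m b) * M) M xs \<in> carrier_mat n n"
proof (induction xs arbitrary: M)
  case (Cons a xs)
  have "(1\<^sub>m n + \<mu> \<cdot>\<^sub>m a) * M \<in> carrier_mat n n" using Cons.prems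
    by (metis add_carrier_mat mult_carrier_mat one_carrier_mat smult_carrier_mat list.set_intros(1) subsetD)
  then show ?case using Cons by simp
qed simp

lemma prodP_carrier[simp]: "set xs \<subseteq> carrier_mat n n \<Longrightarrow> prodP n \<mu> xs \<in> carrier_mat n n"
  unfolding prodP_def by (rule foldl_carrier) auto

lemma foldl_gen: "set xs \<subseteq> carrier_mat n n \<Longrightarrow> M \<in> carrier_mat n n \<Longrightarrow>
   foldl (\<lambda>M b. (1\<^sub>m n + \<mu> \<cdot>\<^sub>m b) * M) M xs = prodP n \<mu> xs * M"
proof (induction xs arbitrary: M)
  case Nil then show ?case by (simp add: prodP_def)
next
  case (Cons b xs)
  have b: "b \<in> carrier_mat n n" and xs: "set xs \<subseteq> carrier_mat n n" using Cons by auto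
  have X: "1\<^sub>m n + \<mu> \<cdot>\<^sub>m b \<in> carrier_mat n n" using b by auto
  have "foldl (\<lambda>M b. (1\<^sub>m n + \<mu> \<cdot>\<^sub>m b) * M) M (b # xs) = prodP n \<mu> xs * ((1\<^sub>m n + \<mu> \<cdot>\<^sub>m b) * M)"
    using Cons.IH[OF xs, of "(1\<^sub>m n + \<mu> \<cdot>\<^sub>m b) * M"] X Cons.prems by simp
  moreover have "prodP n \<mu> (b # xs) = prodP n \<mu> xs * ((1\<^sub>m n + \<mu> \<cdot>\<^sub>m b) * 1\<^sub>m n)"
    using Cons.IH[OF xs, of "(1\<^sub>m n + \<mu> \<cdot>\<^sub>m b) * 1\<^sub>m n"] X by (simp add: prodP_def)
  moreover have "(1\<^sub>m n + \<mu> \<cdot>\<^sub>m b) * 1\<^sub>m n = 1\<^sub>m n + \<mu> \<cdot>\<^sub>m b" using X by (rule right_mult_one_mat)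
  moreover have "prodP n \<mu> xs * (1\<^sub>m n + \<mu> \<cdot>\<^sub>m b) * M = prodP n \<mu> xs * ((1\<^sub>m n + \<mu> \<cdot>\<^sub>m b) * M)"
    using X Cons.prems prodP_carrier[OF xs] by (simp add: assoc_mult_mat[of _ n n _ n _ n])
  ultimately show ?case by simp
qed

lemma prodP_snoc: "prodP n \<mu> (xs @ [b]) = (1\<^sub>m n + \<mu> \<cdot>\<^sub>m b) * prodP n \<mu> xs"
  by (simp add: prodP_def)

lemma prodP_Cons: "set (b # xs) \<subseteq> carrier_mat n n \<Longrightarrow>
   prodP n \<mu> (b # xs) = prodP n \<mu> xs * (1\<^sub>m n + \<mu> \<cdot>\<^sub>m b)"
proof -
  assume a: "set (b # xs) \<subseteq> carrier_mat n n"
  then have X: "1\<^sub>m n + \<mu> \<cdot>\<^sub>m b \<in> carrier_mat n n" by auto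
  then show ?thesis
    using foldl_gen[of xs n "(1\<^sub>m n + \<mu> \<cdot>\<^sub>m b) * 1\<^sub>m n" \<mu>] a right_mult_one_mat[OF X] by (simp add: prodP_def)
qed

lemma one_plus_mv:
  fixes C :: "complex mat"
  assumes "C \<in> carrier_mat n n" "u \<in> carrier_vec n" "a < n"
  shows "((1\<^sub>m n + \<mu> \<cdot>\<^sub>m C) *\<^sub>v u) $ a = u $ a + \<mu> * (\<Sum>b<n. C $$ (a, b) * u $ b)"
proof -
  have "((1\<^sub>m n + \<mu> \<cdot>\<^sub>m C) *\<^sub>v u) $ a = (\<Sum>b<n. ((if a = b then 1 else 0) + \<mu> * C $$ (a, b)) * u $ b)"
    using assms by (auto simp: scalar_prod_def row_def atLeast0LessThan intro!: sum.cong)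
  also have "\<dots> = (\<Sum>b<n. (if a = b then u $ b else 0)) + (\<Sum>b<n. \<mu> * (C $$ (a, b) * u $ b))"
    unfolding sum.distrib[symmetric] by (rule sum.cong) (auto simp: algebra_simps)
  also have "\<dots> = u $ a + \<mu> * (\<Sum>b<n. C $$ (a, b) * u $ b)"
    using assms by (simp add: sum_distrib_left)
  finally show ?thesis .
qed

lemma lemmaD:
  assumes C: "set Cs \<subseteq> carrier_mat n n"
  shows "i \<le> length Cs \<Longrightarrow> a < n \<Longrightarrow>
    yseq (\<lambda>j a b. Cs ! j $$ (a, b)) n \<mu> w i a = (prodP n \<mu> (take i Cs) *\<^sub>v vec n w) $ a"
proof (induction i arbitrary: a)
  case 0 then show ?case by (simp add: prodP_def)
next
  case (Suc i)
  let ?G = "\<lambda>j a b. Cs ! j $$ (a, b)"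
  have Ci: "Cs ! i \<in> carrier_mat n n" using C Suc by auto
  have tk: "set (take i Cs) \<subseteq> carrier_mat n n" using C by (meson order_trans set_take_subset)
  define P where "P = prodP n \<mu> (take i Cs)"
  have P: "P \<in> carrier_mat n n" using tk by (simp add: P_def)
  have "take (Suc i) Cs = take i Cs @ [Cs ! i]" using Suc by (simp add: take_Suc_conv_app_nth)
  then have "prodP n \<mu> (take (Suc i) Cs) *\<^sub>v vec n w = (1\<^sub>m n + \<mu> \<cdot>\<^sub>m Cs ! i) *\<^sub>v (P *\<^sub>v vec n w)"
    using P Ci by (simp add: prodP_snoc P_def assoc_mult_mat_vec[of _ n n _ n])
  also have "\<dots> $ a = (P *\<^sub>v vec n w) $ a + \<mu> * (\<Sum>b<n. Cs ! i $$ (a, b) * (P *\<^sub>v vec n w) $ b)"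
    using Suc.prems P Ci by (intro one_plus_mv) auto
  finally show ?case using Suc by (simp add: P_def Mv_def)
qed

lemma eig_yseq:
  assumes C: "set Cs \<subseteq> carrier_mat n n"
  shows "eigenvalue (prodP n \<mu> Cs) l \<longleftrightarrow>
    (\<exists>w. (\<exists>a<n. w a \<noteq> 0) \<and> (\<forall>a<n. yseq (\<lambda>j a b. Cs ! j $$ (a, b)) n \<mu> w (length Cs) a = l * w a))"
proof -
  have P: "prodP n \<mu> Cs \<in> carrier_mat n n" using C by simp
  have Y: "a < n \<Longrightarrow> yseq (\<lambda>j a b. Cs ! j $$ (a, b)) n \<mu> w (length Cs) a = (prodP n \<mu> Cs *\<^sub>v vec n w) $ a" for w a
    using lemmaD[OF C, of "length Cs" a \<mu> w] by simp
  show ?thesis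
  proof
    assume "eigenvalue (prodP n \<mu> Cs) l"
    then obtain v where v: "v \<in> carrier_vec n" "v \<noteq> 0\<^sub>v n" "prodP n \<mu> Cs *\<^sub>v v = l \<cdot>\<^sub>v v"
      unfolding eigenvalue_def eigenvector_def using P by auto
    define w where "w = (\<lambda>a. v $ a)"
    have vw: "vec n w = v" using v(1) by (auto simp: w_def)
    show "\<exists>w. (\<exists>a<n. w a \<noteq> 0) \<and> (\<forall>a<n. yseq (\<lambda>j a b. Cs ! j $$ (a, b)) n \<mu> w (length Cs) a = l * w a)"
    proof (rule exI[of _ w], intro conjI allI impI)
      show "\<exists>a<n. w a \<noteq> 0"
      proof (rule ccontr)
        assume "\<not> (\<exists>a<n. w a \<noteq> 0)"
        then have "v = 0\<^sub>v n" by (intro eq_vecI) (use v(1) in \<open>auto simp: w_def\<close>)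
        with v(2) show False by simp
      qed
      fix a assume "a < n"
      then show "yseq (\<lambda>j a b. Cs ! j $$ (a, b)) n \<mu> w (length Cs) a = l * w a"
        using Y[of a w] vw v(3) v(1) by (simp add: w_def)
    qed
  next
    assume "\<exists>w. (\<exists>a<n. w a \<noteq> 0) \<and> (\<forall>a<n. yseq (\<lambda>j a b. Cs ! j $$ (a, b)) n \<mu> w (length Cs) a = l * w a)"
    then obtain w where nz: "\<exists>a<n. w a \<noteq> 0" and e: "\<And>a. a < n \<Longrightarrow> yseq (\<lambda>j a b. Cs ! j $$ (a, b)) n \<mu> w (length Cs) a = l * w a"
      by blast
    have "eigenvector (prodP n \<mu> Cs) (vec n w) l"
      unfolding eigenvector_def
    proof (intro conjI)
      show "vec n w \<in> carrier_vec (dim_row (prodP n \<mu> Cs))" using P by simp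
      show "vec n w \<noteq> 0\<^sub>v (dim_row (prodP n \<mu> Cs))"
      proof
        assume "vec n w = 0\<^sub>v (dim_row (prodP n \<mu> Cs))"
        moreover have "dim_row (prodP n \<mu> Cs) = n" using P by simp
        ultimately have z: "vec n w = 0\<^sub>v n" by simp
        have "w a = 0" if "a < n" for a
        proof -
          have "vec n w $ a = 0\<^sub>v n $ a" using z by simp
          then show ?thesis using that by simp
        qed
        with nz show False by blast
      qed
      show "prodP n \<mu> Cs *\<^sub>v vec n w = l \<cdot>\<^sub>v vec n w"
        by (rule eq_vecI) (use P e Y in auto)
    qed
    then show "eigenvalue (prodP n \<mu> Cs) l" unfolding eigenvalue_def by blast
  qed
qed

lemma eig_swap:
  fixes X Y :: "complex mat"
  assumes X: "X \<in> carrier_mat n n" and Y: "Y \<in> carrier_mat n n" and l: "l \<noteq> 0"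
    and e: "eigenvalue (X * Y) l"
  shows "eigenvalue (Y * X) l"
proof -
  obtain v where v: "v \<in> carrier_vec n" "v \<noteq> 0\<^sub>v n" "(X * Y) *\<^sub>v v = l \<cdot>\<^sub>v v"
    using e X Y unfolding eigenvalue_def eigenvector_def by auto
  define u where "u = Y *\<^sub>v v"
  have u: "u \<in> carrier_vec n" using Y v by (simp add: u_def)
  have Xu: "X *\<^sub>v u = l \<cdot>\<^sub>v v" using v X Y by (simp add: u_def)
  have "u \<noteq> 0\<^sub>v n"
  proof
    assume "u = 0\<^sub>v n"
    then have "X *\<^sub>v u = 0\<^sub>v n" using X by auto
    then have lz: "l \<cdot>\<^sub>v v = 0\<^sub>v n" using Xu by simp
    have "v $ a = 0" if "a < n" for a
    proof -
      have "(l \<cdot>\<^sub>v v) $ a = 0\<^sub>v n $ a" using lz by simp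
      then have "l * v $ a = 0" using that v(1) by simp
      then show ?thesis using l by simp
    qed
    then have "v = 0\<^sub>v n" by (intro eq_vecI) (use v(1) in auto)
    with v(2) show False by simp
  qed
  moreover have "(Y * X) *\<^sub>v u = l \<cdot>\<^sub>v u"
    using X Y u v Xu by (simp add: u_def mult_mat_vec)
  ultimately show ?thesis unfolding eigenvalue_def eigenvector_def using X Y u by auto
qed


lemma eig_cshift:
  assumes C: "set Cs \<subseteq> carrier_mat n n" and ne: "Cs \<noteq> []" and l: "l \<noteq> 0"
  shows "eigenvalue (prodP n \<mu> (cshift Cs)) l \<longleftrightarrow> eigenvalue (prodP n \<mu> Cs) l"
proof -
  let ?X = "1\<^sub>m n + \<mu> \<cdot>\<^sub>m last Cs" and ?Q = "prodP n \<mu> (butlast Cs)"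
  have lc: "last Cs \<in> carrier_mat n n" using C ne by auto
  have bc: "set (butlast Cs) \<subseteq> carrier_mat n n" using C by (meson in_set_butlastD subset_iff)
  have X: "?X \<in> carrier_mat n n" using lc by simp
  have Q: "?Q \<in> carrier_mat n n" using bc by simp
  have "prodP n \<mu> Cs = ?X * ?Q"
    using prodP_snoc[of n \<mu> "butlast Cs" "last Cs"] append_butlast_last_id[OF ne] by simp
  moreover have "prodP n \<mu> (cshift Cs) = ?Q * ?X"
    unfolding cshift_def using prodP_Cons[of "last Cs" "butlast Cs" n \<mu>] lc bc by simp
  ultimately show ?thesis using eig_swap[OF X Q l] eig_swap[OF Q X l] by auto
qed

lemma cshift_length[simp]: "xs \<noteq> [] \<Longrightarrow> length (cshift xs) = length xs"
  by (simp add: cshift_def)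

lemma cshift_set[simp]: "xs \<noteq> [] \<Longrightarrow> set (cshift xs) = set xs"
proof -
  assume ne: "xs \<noteq> []"
  have "set xs = set (butlast xs @ [last xs])" using append_butlast_last_id[OF ne] by simp
  then show ?thesis unfolding cshift_def by auto
qed

lemma cshift_pow_props: "xs \<noteq> [] \<Longrightarrow> length ((cshift ^^ r) xs) = length xs \<and> set ((cshift ^^ r) xs) = set xs"
proof (induction r)
  case (Suc r)
  then have IH: "length ((cshift ^^ r) xs) = length xs" "set ((cshift ^^ r) xs) = set xs" by auto
  then have ne: "(cshift ^^ r) xs \<noteq> []" using Suc.prems by auto
  show ?case using IH cshift_length[OF ne] cshift_set[OF ne] by simp
qed simp

lemma cshift_map: "xs \<noteq> [] \<Longrightarrow> cshift (map f xs) = map f (cshift xs)"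
  by (simp add: cshift_def last_map map_butlast)

lemma cshift_pow_map: "xs \<noteq> [] \<Longrightarrow> (cshift ^^ r) (map f xs) = map f ((cshift ^^ r) xs)"
proof (induction r)
  case (Suc r)
  have "(cshift ^^ r) xs \<noteq> []" using cshift_pow_props[OF Suc.prems, of r] Suc.prems by auto
  then show ?case using Suc by (simp add: cshift_map)
qed simp

lemma eig_cshift_pow:
  assumes C: "set Cs \<subseteq> carrier_mat n n" and ne: "Cs \<noteq> []" and l: "l \<noteq> 0"
  shows "eigenvalue (prodP n \<mu> ((cshift ^^ r) Cs)) l \<longleftrightarrow> eigenvalue (prodP n \<mu> Cs) l"
proof (induction r)
  case (Suc r)
  have p: "set ((cshift ^^ r) Cs) \<subseteq> carrier_mat n n" "(cshift ^^ r) Cs \<noteq> []"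
    using cshift_pow_props[OF ne, of r] C ne by auto
  show ?case using eig_cshift[OF p l] Suc by simp
qed simp


lemma merge_mat:
  fixes a b :: "complex mat"
  assumes a: "a \<in> carrier_mat n n" and b: "b \<in> carrier_mat n n" and ba: "b * a = 0\<^sub>m n n"
  shows "(1\<^sub>m n + \<mu> \<cdot>\<^sub>m b) * (1\<^sub>m n + \<mu> \<cdot>\<^sub>m a) = 1\<^sub>m n + \<mu> \<cdot>\<^sub>m (a + b)"
proof -
  have A: "1\<^sub>m n + \<mu> \<cdot>\<^sub>m a \<in> carrier_mat n n" using a by simp
  have "(1\<^sub>m n + \<mu> \<cdot>\<^sub>m b) * (1\<^sub>m n + \<mu> \<cdot>\<^sub>m a) = 1\<^sub>m n * (1\<^sub>m n + \<mu> \<cdot>\<^sub>m a) + (\<mu> \<cdot>\<^sub>m b) * (1\<^sub>m n + \<mu> \<cdot>\<^sub>m a)"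
    using a b by (intro add_mult_distrib_mat[of _ n n]) auto
  also have "(\<mu> \<cdot>\<^sub>m b) * (1\<^sub>m n + \<mu> \<cdot>\<^sub>m a) = (\<mu> \<cdot>\<^sub>m b) * 1\<^sub>m n + (\<mu> \<cdot>\<^sub>m b) * (\<mu> \<cdot>\<^sub>m a)"
    using a b by (intro mult_add_distrib_mat[of _ n n]) auto
  also have "(\<mu> \<cdot>\<^sub>m b) * (\<mu> \<cdot>\<^sub>m a) = 0\<^sub>m n n"
    using a b ba by (simp add: mult_smult_assoc_mat[of _ n n _ n] mult_smult_distrib[of _ n n _ n])
  also have "1\<^sub>m n * (1\<^sub>m n + \<mu> \<cdot>\<^sub>m a) = 1\<^sub>m n + \<mu> \<cdot>\<^sub>m a" using A by (rule left_mult_one_mat)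
  also have "(\<mu> \<cdot>\<^sub>m b) * 1\<^sub>m n = \<mu> \<cdot>\<^sub>m b" by (rule right_mult_one_mat[OF smult_carrier_mat[OF b]])
  also have "\<mu> \<cdot>\<^sub>m b + 0\<^sub>m n n = \<mu> \<cdot>\<^sub>m b" by (rule right_add_zero_mat[OF smult_carrier_mat[OF b]])
  also have "1\<^sub>m n + \<mu> \<cdot>\<^sub>m a + \<mu> \<cdot>\<^sub>m b = 1\<^sub>m n + (\<mu> \<cdot>\<^sub>m a + \<mu> \<cdot>\<^sub>m b)"
    by (rule assoc_add_mat[OF one_carrier_mat smult_carrier_mat[OF a] smult_carrier_mat[OF b]])
  also have "\<mu> \<cdot>\<^sub>m a + \<mu> \<cdot>\<^sub>m b = \<mu> \<cdot>\<^sub>m (a + b)" using a b by (simp add: add_smult_distrib_left_mat)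
  finally show ?thesis .
qed

lemma sum_blocks: "(\<Sum>k<(d::nat)*n. f k) = (\<Sum>j<d. \<Sum>b<n. f (j*n+b))"
proof (induction d)
  case (Suc d)
  have "(\<Sum>k<Suc d*n. f k) = (\<Sum>k\<in>{0..<d*n}. f k) + (\<Sum>k\<in>{d*n..<d*n+n}. f k)"
    using sum.atLeastLessThan_concat[of 0 "d*n" "d*n+n" f] by (simp add: atLeast0LessThan add.commute)
  also have "(\<Sum>k\<in>{d*n..<d*n+n}. f k) = (\<Sum>b<n. f (d*n+b))"
    using sum.shift_bounds_nat_ivl[of f 0 "d*n" n] by (simp add: atLeast0LessThan add.commute)
  finally show ?case using Suc by (simp add: atLeast0LessThan)
qed simp

lemma blk_div[simp]: "a < (n::nat) \<Longrightarrow> (i*n+a) div n = i"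
  by simp
lemma blk_mod[simp]: "a < (n::nat) \<Longrightarrow> (i*n+a) mod n = a"
  by simp
lemma blk_bound: "j < d \<Longrightarrow> b < (n::nat) \<Longrightarrow> j*n+b < d*n"
proof -
  assume "j < d" "b < n"
  then have "j*n+b < (j+1)*n" by simp
  also have "\<dots> \<le> d*n" using \<open>j < d\<close> by (intro mult_le_mono1) simp
  finally show ?thesis .
qed

lemma blk_coord:
  fixes Bs :: "real mat list"
  assumes v: "v \<in> carrier_vec (d*n)" and i: "i < d" and a: "a < n"
  shows "(map_mat complex_of_real (mat (d*n) (d*n) (\<lambda>(k, k'). if P (k div n) (k' div n) then Bs ! (k' div n) $$ (k mod n, k' mod n) else 0)) *\<^sub>v v) $ (i*n+a)
     = (\<Sum>j<d. if P i j then Mv (\<lambda>j a b. complex_of_real (Bs ! j $$ (a, b))) n j (\<lambda>b. v $ (j*n+b)) a else 0)"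
    (is "(?M *\<^sub>v v) $ _ = _")
proof -
  have k: "i*n+a < d*n" using blk_bound[OF i a] .
  have "(?M *\<^sub>v v) $ (i*n+a) = (\<Sum>k'<d*n. ?M $$ (i*n+a, k') * v $ k')"
    using k v by (simp add: scalar_prod_def row_def atLeast0LessThan)
  also have "\<dots> = (\<Sum>j<d. \<Sum>b<n. ?M $$ (i*n+a, j*n+b) * v $ (j*n+b))"
    by (rule sum_blocks)
  also have "\<dots> = (\<Sum>j<d. if P i j then Mv (\<lambda>j a b. complex_of_real (Bs ! j $$ (a, b))) n j (\<lambda>b. v $ (j*n+b)) a else 0)"
  proof (rule sum.cong[OF refl])
    fix j assume j: "j \<in> {..<d}"
    have "(\<Sum>b<n. ?M $$ (i*n+a, j*n+b) * v $ (j*n+b)) = (\<Sum>b<n. (if P i j then complex_of_real (Bs ! j $$ (a, b)) else 0) * v $ (j*n+b))"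
    proof (rule sum.cong[OF refl])
      fix b assume b: "b \<in> {..<n}"
      then have "j*n+b < d*n" using blk_bound j by auto
      then show "?M $$ (i*n+a, j*n+b) * v $ (j*n+b) = (if P i j then complex_of_real (Bs ! j $$ (a, b)) else 0) * v $ (j*n+b)"
        using k a b by simp
    qed
    then show "(\<Sum>b<n. ?M $$ (i*n+a, j*n+b) * v $ (j*n+b)) = (if P i j then Mv (\<lambda>j a b. complex_of_real (Bs ! j $$ (a, b))) n j (\<lambda>b. v $ (j*n+b)) a else 0)"
      by (simp add: Mv_def)
  qed
  finally show ?thesis .
qed

lemma inv_IL:
  fixes Bs :: "real mat list" and n :: nat
  defines "m \<equiv> length Bs * n"
  obtains Ai where "Ai \<in> carrier_mat m m" "Ai * (1\<^sub>m m - block_L n Bs) = 1\<^sub>m m"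
    "(1\<^sub>m m - block_L n Bs) * Ai = 1\<^sub>m m"
    "iter_mat n Bs = Ai * block_U n Bs"
proof -
  let ?A = "1\<^sub>m m - block_L n Bs"
  have L: "block_L n Bs \<in> carrier_mat m m" by (simp add: block_L_def m_def)
  have A: "?A \<in> carrier_mat m m" using L by (rule minus_carrier_mat)
  have up: "?A $$ (i, j) = 0" if "i < j" "j < m" for i j
  proof -
    have "i div n \<le> j div n" using that by (simp add: div_le_mono)
    then show ?thesis using that L by (simp add: block_L_def m_def)
  qed
  have dg: "diag_mat ?A = map (\<lambda>i. 1) [0..<m]"
    unfolding diag_mat_def using A L by (auto simp: block_L_def m_def)
  have "det ?A = 1"
    using det_lower_triangular[OF up A] dg by (simp add: map_replicate_const)
  then have U: "?A \<in> Units (ring_mat TYPE(real) m ())"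
    using det_non_zero_imp_unit[OF A] by simp
  obtain Ai where Ai: "mat_inverse ?A = Some Ai"
    using mat_inverse(1)[OF A, of "()"] U by (cases "mat_inverse ?A") auto
  from mat_inverse(2)[OF A Ai] have "?A * Ai = 1\<^sub>m m" "Ai * ?A = 1\<^sub>m m" "Ai \<in> carrier_mat m m" by auto
  moreover have "iter_mat n Bs = Ai * block_U n Bs" unfolding iter_mat_def using Ai by (simp add: m_def)
  ultimately show ?thesis using that by blast
qed

lemma lemmaA:
  fixes Bs :: "real mat list" and n :: nat
  defines "m \<equiv> length Bs * n"
  shows "eigenvalue (map_mat complex_of_real (iter_mat n Bs)) l \<longleftrightarrow>
    (\<exists>v. v \<in> carrier_vec m \<and> v \<noteq> 0\<^sub>v m \<and>
      map_mat complex_of_real (block_U n Bs) *\<^sub>v v = l \<cdot>\<^sub>v (map_mat complex_of_real (1\<^sub>m m - block_L n Bs) *\<^sub>v v))"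
proof -
  obtain Ai where Ai: "Ai \<in> carrier_mat m m" "Ai * (1\<^sub>m m - block_L n Bs) = 1\<^sub>m m"
    "(1\<^sub>m m - block_L n Bs) * Ai = 1\<^sub>m m" "iter_mat n Bs = Ai * block_U n Bs"
    using inv_IL[of Bs n] unfolding m_def by blast
  let ?c = "map_mat complex_of_real"
  have U: "block_U n Bs \<in> carrier_mat m m" by (simp add: block_U_def m_def)
  have L: "block_L n Bs \<in> carrier_mat m m" by (simp add: block_L_def m_def)
  have A: "1\<^sub>m m - block_L n Bs \<in> carrier_mat m m" using L by (rule minus_carrier_mat)
  have T: "?c (iter_mat n Bs) = ?c Ai * ?c (block_U n Bs)"
    using Ai(4) of_real_hom.mat_hom_mult[OF Ai(1) U] by simp
  have i1: "?c Ai * ?c (1\<^sub>m m - block_L n Bs) = 1\<^sub>m m"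
    using of_real_hom.mat_hom_mult[OF Ai(1) A] Ai(2) of_real_hom.mat_hom_one by metis
  have i2: "?c (1\<^sub>m m - block_L n Bs) * ?c Ai = 1\<^sub>m m"
    using of_real_hom.mat_hom_mult[OF A Ai(1)] Ai(3) of_real_hom.mat_hom_one by metis
  have cAi: "?c Ai \<in> carrier_mat m m" using Ai(1) by simp
  have cU: "?c (block_U n Bs) \<in> carrier_mat m m" using U by simp
  have cA: "?c (1\<^sub>m m - block_L n Bs) \<in> carrier_mat m m" using A by simp
  have dT: "dim_row (?c (iter_mat n Bs)) = m" using T cAi by simp
  show ?thesis
  proof
    assume "eigenvalue (?c (iter_mat n Bs)) l"
    then obtain v where v: "v \<in> carrier_vec m" "v \<noteq> 0\<^sub>v m" "?c (iter_mat n Bs) *\<^sub>v v = l \<cdot>\<^sub>v v"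
      unfolding eigenvalue_def eigenvector_def dT by blast
    have "?c (block_U n Bs) *\<^sub>v v = (?c (1\<^sub>m m - block_L n Bs) * ?c Ai) *\<^sub>v (?c (block_U n Bs) *\<^sub>v v)"
      using i2 cU v(1) by simp
    also have "\<dots> = ?c (1\<^sub>m m - block_L n Bs) *\<^sub>v (?c (iter_mat n Bs) *\<^sub>v v)"
      using T cA cAi cU v(1) by simp
    also have "\<dots> = l \<cdot>\<^sub>v (?c (1\<^sub>m m - block_L n Bs) *\<^sub>v v)"
      using v(3) cA v(1) by (simp add: mult_mat_vec)
    finally show "\<exists>v. v \<in> carrier_vec m \<and> v \<noteq> 0\<^sub>v m \<and>
      ?c (block_U n Bs) *\<^sub>v v = l \<cdot>\<^sub>v (?c (1\<^sub>m m - block_L n Bs) *\<^sub>v v)" using v by blast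
  next
    assume "\<exists>v. v \<in> carrier_vec m \<and> v \<noteq> 0\<^sub>v m \<and>
      ?c (block_U n Bs) *\<^sub>v v = l \<cdot>\<^sub>v (?c (1\<^sub>m m - block_L n Bs) *\<^sub>v v)"
    then obtain v where v: "v \<in> carrier_vec m" "v \<noteq> 0\<^sub>v m"
      "?c (block_U n Bs) *\<^sub>v v = l \<cdot>\<^sub>v (?c (1\<^sub>m m - block_L n Bs) *\<^sub>v v)" by blast
    have "?c (iter_mat n Bs) *\<^sub>v v = ?c Ai *\<^sub>v (?c (block_U n Bs) *\<^sub>v v)"
      using T cAi cU v(1) by simp
    also have "\<dots> = l \<cdot>\<^sub>v ((?c Ai * ?c (1\<^sub>m m - block_L n Bs)) *\<^sub>v v)"
      using v(3) cAi cA v(1) by (simp add: mult_mat_vec)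
    also have "\<dots> = l \<cdot>\<^sub>v v" using i1 v(1) by simp
    finally have "eigenvector (?c (iter_mat n Bs)) v l"
      unfolding eigenvector_def dT using v by blast
    then show "eigenvalue (?c (iter_mat n Bs)) l" unfolding eigenvalue_def by blast
  qed
qed

lemma blk_decomp: "k < d*(n::nat) \<Longrightarrow> k div n < d \<and> k mod n < n \<and> k = (k div n)*n + k mod n"
proof -
  assume k: "k < d*n"
  then have n: "n > 0" by (cases "n = 0") auto
  have "k div n < d" using k by (simp add: less_mult_imp_div_less)
  moreover have "k mod n < n" using n by simp
  ultimately show ?thesis by simp
qed

lemma sysz_cong: "(\<And>j b. j < d \<Longrightarrow> b < n \<Longrightarrow> x j b = x' j b) \<Longrightarrow> sysz G n d l x i a = sysz G n d l x' i a"
  unfolding sysz_def by (intro sum.cong refl arg_cong2[where f="(*)"] Mv_cong) auto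

lemma lemmaA2:
  fixes Bs :: "real mat list" and n :: nat
  defines "m \<equiv> length Bs * n" and "d \<equiv> length Bs"
    and "G \<equiv> (\<lambda>j a b. complex_of_real (Bs ! j $$ (a, b)))"
  shows "(\<exists>v. v \<in> carrier_vec m \<and> v \<noteq> 0\<^sub>v m \<and>
      map_mat complex_of_real (block_U n Bs) *\<^sub>v v = l \<cdot>\<^sub>v (map_mat complex_of_real (1\<^sub>m m - block_L n Bs) *\<^sub>v v))
    \<longleftrightarrow> (\<exists>x. (\<exists>i<d. \<exists>a<n. x i a \<noteq> 0) \<and> (\<forall>i<d. \<forall>a<n. l * x i a = sysz G n d l x i a))"
proof -
  let ?c = "map_mat complex_of_real"
  have U: "block_U n Bs \<in> carrier_mat m m" by (simp add: block_U_def m_def)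
  have L: "block_L n Bs \<in> carrier_mat m m" by (simp add: block_L_def m_def)
  have cA: "?c (1\<^sub>m m - block_L n Bs) = 1\<^sub>m m - ?c (block_L n Bs)"
    by (rule eq_matI) (use L in auto)
  have key: "?c (block_U n Bs) *\<^sub>v v = l \<cdot>\<^sub>v (?c (1\<^sub>m m - block_L n Bs) *\<^sub>v v)
     \<longleftrightarrow> (\<forall>i<d. \<forall>a<n. l * v $ (i*n+a) = sysz G n d l (\<lambda>j b. v $ (j*n+b)) i a)"
    if v: "v \<in> carrier_vec m" for v
  proof -
    have cU': "?c (block_U n Bs) \<in> carrier_mat m m" using U by simp
    have cL': "?c (block_L n Bs) \<in> carrier_mat m m" using L by simp
    have Av: "?c (1\<^sub>m m - block_L n Bs) *\<^sub>v v = v - ?c (block_L n Bs) *\<^sub>v v"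
      unfolding cA using cL' v by (simp add: minus_mult_distrib_mat_vec[of _ m m])
    define M where "M = (\<lambda>j a. Mv G n j (\<lambda>b. v $ (j*n+b)) a)"
    have Uco: "(?c (block_U n Bs) *\<^sub>v v) $ (i*n+a) = (\<Sum>j<d. if i \<le> j then M j a else 0)"
      if "i < d" "a < n" for i a
      unfolding M_def G_def d_def
      using blk_coord[where P="\<lambda>i j. i \<le> j" and Bs=Bs and d=d and n=n and v=v and i=i and a=a] v that
      by (simp add: block_U_def m_def d_def)
    have Lco: "(?c (block_L n Bs) *\<^sub>v v) $ (i*n+a) = (\<Sum>j<d. if j < i then M j a else 0)"
      if "i < d" "a < n" for i a
      unfolding M_def G_def d_def
      using blk_coord[where P="\<lambda>i j. j < i" and Bs=Bs and d=d and n=n and v=v and i=i and a=a] v that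
      by (simp add: block_L_def m_def d_def)
    have eqi: "(\<Sum>j<d. if i \<le> j then M j a else 0) = l * (v $ (i*n+a) - (\<Sum>j<d. if j < i then M j a else 0))
       \<longleftrightarrow> l * v $ (i*n+a) = sysz G n d l (\<lambda>j b. v $ (j*n+b)) i a" for i a
    proof -
      have "sysz G n d l (\<lambda>j b. v $ (j*n+b)) i a = (\<Sum>j<d. if i \<le> j then M j a else 0) + l * (\<Sum>j<d. if j < i then M j a else 0)"
        unfolding sysz_def M_def sum_distrib_left sum.distrib[symmetric] by (rule sum.cong) auto
      then show ?thesis by (auto simp: algebra_simps)
    qed
    have "?c (block_U n Bs) *\<^sub>v v = l \<cdot>\<^sub>v (?c (1\<^sub>m m - block_L n Bs) *\<^sub>v v)
      \<longleftrightarrow> (\<forall>k<m. (?c (block_U n Bs) *\<^sub>v v) $ k = l * (v $ k - (?c (block_L n Bs) *\<^sub>v v) $ k))"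
    proof -
      let ?X = "?c (block_U n Bs) *\<^sub>v v" and ?Y = "l \<cdot>\<^sub>v (v - ?c (block_L n Bs) *\<^sub>v v)"
      have dX: "dim_vec ?X = m" using cU' by simp
      have dY: "dim_vec ?Y = m" using v L by simp
      have Yk: "?Y $ k = l * (v $ k - (?c (block_L n Bs) *\<^sub>v v) $ k)" if "k < m" for k
        using that v cL' by simp
      have "?X = ?Y \<longleftrightarrow> (\<forall>k<m. ?X $ k = ?Y $ k)"
      proof
        assume "\<forall>k<m. ?X $ k = ?Y $ k"
        then show "?X = ?Y" using dX dY by (intro eq_vecI) auto
      qed simp
      then show ?thesis unfolding Av using Yk by auto
    qed
    also have "\<dots> \<longleftrightarrow> (\<forall>i<d. \<forall>a<n. (?c (block_U n Bs) *\<^sub>v v) $ (i*n+a) = l * (v $ (i*n+a) - (?c (block_L n Bs) *\<^sub>v v) $ (i*n+a)))"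
    proof
      assume H: "\<forall>k<m. (?c (block_U n Bs) *\<^sub>v v) $ k = l * (v $ k - (?c (block_L n Bs) *\<^sub>v v) $ k)"
      show "\<forall>i<d. \<forall>a<n. (?c (block_U n Bs) *\<^sub>v v) $ (i*n+a) = l * (v $ (i*n+a) - (?c (block_L n Bs) *\<^sub>v v) $ (i*n+a))"
        using H blk_bound unfolding m_def d_def by auto
    next
      assume H: "\<forall>i<d. \<forall>a<n. (?c (block_U n Bs) *\<^sub>v v) $ (i*n+a) = l * (v $ (i*n+a) - (?c (block_L n Bs) *\<^sub>v v) $ (i*n+a))"
      show "\<forall>k<m. (?c (block_U n Bs) *\<^sub>v v) $ k = l * (v $ k - (?c (block_L n Bs) *\<^sub>v v) $ k)"
      proof (intro allI impI)
        fix k assume "k < m"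
        then have "k div n < d \<and> k mod n < n \<and> k = (k div n)*n + k mod n"
          using blk_decomp[of k d n] by (simp add: m_def d_def)
        then show "(?c (block_U n Bs) *\<^sub>v v) $ k = l * (v $ k - (?c (block_L n Bs) *\<^sub>v v) $ k)"
          using H by metis
      qed
    qed
    also have "\<dots> \<longleftrightarrow> (\<forall>i<d. \<forall>a<n. l * v $ (i*n+a) = sysz G n d l (\<lambda>j b. v $ (j*n+b)) i a)"
      using Uco Lco eqi by simp
    finally show ?thesis .
  qed
  show ?thesis
  proof
    assume "\<exists>v. v \<in> carrier_vec m \<and> v \<noteq> 0\<^sub>v m \<and>
      ?c (block_U n Bs) *\<^sub>v v = l \<cdot>\<^sub>v (?c (1\<^sub>m m - block_L n Bs) *\<^sub>v v)"
    then obtain v where v: "v \<in> carrier_vec m" "v \<noteq> 0\<^sub>v m"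
      "?c (block_U n Bs) *\<^sub>v v = l \<cdot>\<^sub>v (?c (1\<^sub>m m - block_L n Bs) *\<^sub>v v)" by blast
    show "\<exists>x. (\<exists>i<d. \<exists>a<n. x i a \<noteq> 0) \<and> (\<forall>i<d. \<forall>a<n. l * x i a = sysz G n d l x i a)"
    proof (rule exI[of _ "\<lambda>j b. v $ (j*n+b)"], intro conjI)
      show "\<forall>i<d. \<forall>a<n. l * v $ (i*n+a) = sysz G n d l (\<lambda>j b. v $ (j*n+b)) i a"
        using key[OF v(1)] v(3) by blast
      show "\<exists>i<d. \<exists>a<n. v $ (i*n+a) \<noteq> 0"
      proof (rule ccontr)
        assume "\<not> (\<exists>i<d. \<exists>a<n. v $ (i*n+a) \<noteq> 0)"
        then have z: "\<And>i a. i < d \<Longrightarrow> a < n \<Longrightarrow> v $ (i*n+a) = 0" by blast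
        have "v = 0\<^sub>v m"
        proof (rule eq_vecI)
          fix k assume "k < dim_vec (0\<^sub>v m)"
          then have "k < m" by simp
          then have "k div n < d \<and> k mod n < n \<and> k = (k div n)*n + k mod n"
            using blk_decomp[of k d n] by (simp add: m_def d_def)
          then show "v $ k = 0\<^sub>v m $ k" using z \<open>k < m\<close> by (metis index_zero_vec(1))
        qed (use v(1) in simp)
        with v(2) show False by simp
      qed
    qed
  next
    assume "\<exists>x. (\<exists>i<d. \<exists>a<n. x i a \<noteq> 0) \<and> (\<forall>i<d. \<forall>a<n. l * x i a = sysz G n d l x i a)"
    then obtain x where nz: "\<exists>i<d. \<exists>a<n. x i a \<noteq> 0" and sy: "\<forall>i<d. \<forall>a<n. l * x i a = sysz G n d l x i a"
      by blast
    define v where "v = vec m (\<lambda>k. x (k div n) (k mod n))"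
    have v: "v \<in> carrier_vec m" by (simp add: v_def)
    have vx: "v $ (j*n+b) = x j b" if "j < d" "b < n" for j b
      using that blk_bound[OF that] by (simp add: v_def m_def d_def)
    have "\<forall>i<d. \<forall>a<n. l * v $ (i*n+a) = sysz G n d l (\<lambda>j b. v $ (j*n+b)) i a"
    proof (intro allI impI)
      fix i a assume "i < d" "a < n"
      have "sysz G n d l (\<lambda>j b. v $ (j*n+b)) i a = sysz G n d l x i a"
        by (rule sysz_cong) (simp add: vx)
      then show "l * v $ (i*n+a) = sysz G n d l (\<lambda>j b. v $ (j*n+b)) i a"
        using sy \<open>i < d\<close> \<open>a < n\<close> vx by simp
    qed
    then have e: "?c (block_U n Bs) *\<^sub>v v = l \<cdot>\<^sub>v (?c (1\<^sub>m m - block_L n Bs) *\<^sub>v v)"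
      using key[OF v] by blast
    have "v \<noteq> 0\<^sub>v m"
    proof
      assume "v = 0\<^sub>v m"
      obtain i a where ia: "i < d" "a < n" "x i a \<noteq> 0" using nz by blast
      have "v $ (i*n+a) = 0" using \<open>v = 0\<^sub>v m\<close> blk_bound[OF ia(1,2)] by (simp add: m_def d_def)
      with vx[OF ia(1,2)] ia(3) show False by simp
    qed
    then show "\<exists>v. v \<in> carrier_vec m \<and> v \<noteq> 0\<^sub>v m \<and>
      ?c (block_U n Bs) *\<^sub>v v = l \<cdot>\<^sub>v (?c (1\<^sub>m m - block_L n Bs) *\<^sub>v v)" using v e by blast
  qed
qed

lemma yseq_cong:
  assumes "\<And>j a b. j < d \<Longrightarrow> a < n \<Longrightarrow> b < n \<Longrightarrow> G j a b = G' j a b"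
  shows "i \<le> d \<Longrightarrow> a < n \<Longrightarrow> yseq G n \<mu> w i a = yseq G' n \<mu> w i a"
proof (induction i arbitrary: a)
  case (Suc i)
  have "Mv G n i (yseq G n \<mu> w i) a = Mv G' n i (yseq G' n \<mu> w i) a"
    unfolding Mv_def using Suc assms by (intro sum.cong refl) auto
  then show ?case using Suc by simp
qed simp

lemma splitting_facts:
  assumes "is_splitting n BJ Bs"
  shows "length Bs \<ge> 1" "set Bs \<subseteq> carrier_mat n n" "BJ \<in> carrier_mat n n"
    "\<And>a b. a < n \<Longrightarrow> b < n \<Longrightarrow> BJ $$ (a, b) = (\<Sum>p<length Bs. Bs ! p $$ (a, b))"
  using assms unfolding is_splitting_def
  by (auto simp: in_set_conv_nth)

lemma charac:
  assumes sp: "is_splitting n BJ Bs" and l: "l \<noteq> 0"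
  shows "l \<in> nonzero_eigenvalues (iter_mat n Bs) \<longleftrightarrow>
    (if l = 1 then (\<exists>w. (\<exists>a<n. w a \<noteq> 0) \<and> (\<forall>a<n. (\<Sum>b<n. complex_of_real (BJ $$ (a, b)) * w b) = w a))
     else eigenvalue (prodP n ((l - 1) / l) (map (map_mat complex_of_real) Bs)) l)"
proof -
  note F = splitting_facts[OF sp]
  define d where "d = length Bs"
  define G where "G = (\<lambda>j a b. complex_of_real (Bs ! j $$ (a, b)))"
  define \<mu> where "\<mu> = (l - 1) / l"
  have "l \<in> nonzero_eigenvalues (iter_mat n Bs) \<longleftrightarrow>
     (\<exists>x. (\<exists>i<d. \<exists>a<n. x i a \<noteq> 0) \<and> (\<forall>i<d. \<forall>a<n. l * x i a = sysz G n d l x i a))"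
    unfolding nonzero_eigenvalues_def using l lemmaA[of n Bs l] lemmaA2[of Bs n l]
    by (simp add: d_def G_def)
  also have "\<dots> \<longleftrightarrow> (\<exists>w. (\<exists>a<n. w a \<noteq> 0) \<and> (\<forall>a<n. (\<Sum>j<d. Mv G n j (yseq G n \<mu> w j) a) = l * w a))"
    by (rule lemmaB) (use l F(1) in \<open>auto simp: d_def \<mu>_def\<close>)
  finally have E: "l \<in> nonzero_eigenvalues (iter_mat n Bs) \<longleftrightarrow>
     (\<exists>w. (\<exists>a<n. w a \<noteq> 0) \<and> (\<forall>a<n. (\<Sum>j<d. Mv G n j (yseq G n \<mu> w j) a) = l * w a))" .
  show ?thesis
  proof (cases "l = 1")
    case True
    then have mu0: "\<mu> = 0" by (simp add: \<mu>_def)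
    have "(\<Sum>j<d. Mv G n j (yseq G n \<mu> w j) a) = (\<Sum>b<n. complex_of_real (BJ $$ (a, b)) * w b)"
      if "a < n" for w a
    proof -
      have "(\<Sum>j<d. Mv G n j (yseq G n \<mu> w j) a) = (\<Sum>j<d. \<Sum>b<n. G j a b * w b)"
        by (simp add: mu0 yseq_one Mv_def)
      also have "\<dots> = (\<Sum>b<n. (\<Sum>j<d. G j a b) * w b)"
        by (simp add: sum.swap[of _ "{..<d}"] sum_distrib_right)
      also have "\<dots> = (\<Sum>b<n. complex_of_real (BJ $$ (a, b)) * w b)"
        using F(4) that by (intro sum.cong refl) (simp add: G_def d_def)
      finally show ?thesis .
    qed
    then show ?thesis using E True by simp
  next
    case False
    let ?Cs = "map (map_mat complex_of_real) Bs"
    have C: "set ?Cs \<subseteq> carrier_mat n n" using F(2) by auto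
    have GC: "G j a b = ?Cs ! j $$ (a, b)" if "j < d" "a < n" "b < n" for j a b
    proof -
      have "Bs ! j \<in> carrier_mat n n" using F(2) that by (auto simp: d_def)
      then show ?thesis using that by (simp add: G_def d_def)
    qed
    have "l \<in> nonzero_eigenvalues (iter_mat n Bs) \<longleftrightarrow>
      (\<exists>w. (\<exists>a<n. w a \<noteq> 0) \<and> (\<forall>a<n. yseq G n \<mu> w d a = l * w a))"
      unfolding E using lemmaC[OF l False \<mu>_def] by simp
    also have "\<dots> \<longleftrightarrow> (\<exists>w. (\<exists>a<n. w a \<noteq> 0) \<and> (\<forall>a<n. yseq (\<lambda>j a b. ?Cs ! j $$ (a, b)) n \<mu> w (length ?Cs) a = l * w a))"
      using yseq_cong[of d n G "\<lambda>j a b. ?Cs ! j $$ (a, b)" d _ \<mu>] GC by (simp add: d_def)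
    also have "\<dots> \<longleftrightarrow> eigenvalue (prodP n \<mu> ?Cs) l"
      using eig_yseq[OF C] by simp
    finally show ?thesis using False by (simp add: \<mu>_def)
  qed
qed

lemma prodP_eq:
  fixes Rs Ss :: "real mat list" and \<mu> :: complex
  assumes d: "d \<ge> 1" and lR: "length Rs = d" and lS: "length Ss = d + 1"
    and cR: "set Rs \<subseteq> carrier_mat n n" and cS: "set Ss \<subseteq> carrier_mat n n"
    and I: "\<forall>p < d - 1. Ss ! p = Rs ! p"
    and II: "is_splitting n (Rs ! (d - 1)) [Ss ! (d - 1), Ss ! d]"
    and III: "Ss ! d * Ss ! (d - 1) = 0\<^sub>m n n"
  shows "prodP n \<mu> (map (map_mat complex_of_real) Ss) = prodP n \<mu> (map (map_mat complex_of_real) Rs)"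
proof -
  let ?c = "map_mat complex_of_real"
  define a where "a = Ss ! (d - 1)"
  define b where "b = Ss ! d"
  define ys where "ys = take (d - 1) Rs"
  have a: "a \<in> carrier_mat n n" using cS lS d by (auto simp: a_def)
  have b: "b \<in> carrier_mat n n" using cS lS by (auto simp: b_def)
  have ysS: "take (d - 1) Ss = ys" unfolding ys_def
    by (rule nth_equalityI) (use lR lS d I in auto)
  have Rs: "Rs = ys @ [Rs ! (d - 1)]"
  proof -
    have "Rs = take (Suc (d - 1)) Rs" using lR d by simp
    also have "\<dots> = ys @ [Rs ! (d - 1)]" unfolding ys_def using lR d
      by (intro take_Suc_conv_app_nth) simp
    finally show ?thesis .
  qed
  have Ss: "Ss = ys @ [a, b]"
  proof -
    have "Ss = take d Ss @ [b]" using take_Suc_conv_app_nth[of d Ss] lS by (simp add: b_def)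
    also have "take d Ss = take (d - 1) Ss @ [a]"
    proof -
      have "take d Ss = take (Suc (d - 1)) Ss" using d by simp
      also have "\<dots> = take (d - 1) Ss @ [a]" unfolding a_def using lS d
        by (intro take_Suc_conv_app_nth) simp
      finally show ?thesis .
    qed
    finally show ?thesis using ysS by simp
  qed
  have rd: "Rs ! (d - 1) = a + b"
  proof -
    have "Rs ! (d - 1) = mat n n (\<lambda>ij. \<Sum>p<length [a, b]. [a, b] ! p $$ ij)"
      using II unfolding is_splitting_def a_def b_def by blast
    also have "\<dots> = a + b" by (rule eq_matI) (use a b in \<open>auto simp: numeral_2_eq_2\<close>)
    finally show ?thesis .
  qed
  have ca: "?c a \<in> carrier_mat n n" and cb: "?c b \<in> carrier_mat n n" using a b by auto
  have z0: "?c (0\<^sub>m n n) = 0\<^sub>m n n" by (rule eq_matI) auto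
  have ba: "?c b * ?c a = 0\<^sub>m n n"
  proof -
    have "?c b * ?c a = ?c (b * a)" by (rule of_real_hom.mat_hom_mult[OF b a, symmetric])
    also have "b * a = 0\<^sub>m n n" using III by (simp add: a_def b_def)
    finally show ?thesis using z0 by simp
  qed
  have cab: "?c (a + b) = ?c a + ?c b" by (rule eq_matI) (use a b in auto)
  have cys: "set (map ?c ys) \<subseteq> carrier_mat n n" using cR unfolding ys_def
    by (auto dest: in_set_takeD)
  have "prodP n \<mu> (map ?c Ss) = (1\<^sub>m n + \<mu> \<cdot>\<^sub>m ?c b) * ((1\<^sub>m n + \<mu> \<cdot>\<^sub>m ?c a) * prodP n \<mu> (map ?c ys))"
    unfolding Ss using prodP_snoc[of n \<mu> "map ?c ys @ [?c a]" "?c b"] prodP_snoc[of n \<mu> "map ?c ys" "?c a"] by simp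
  also have "\<dots> = ((1\<^sub>m n + \<mu> \<cdot>\<^sub>m ?c b) * (1\<^sub>m n + \<mu> \<cdot>\<^sub>m ?c a)) * prodP n \<mu> (map ?c ys)"
    using ca cb cys by (simp add: assoc_mult_mat[of _ n n _ n _ n])
  also have "(1\<^sub>m n + \<mu> \<cdot>\<^sub>m ?c b) * (1\<^sub>m n + \<mu> \<cdot>\<^sub>m ?c a) = 1\<^sub>m n + \<mu> \<cdot>\<^sub>m ?c (Rs ! (d - 1))"
    unfolding rd cab by (rule merge_mat[OF ca cb ba])
  also have "(1\<^sub>m n + \<mu> \<cdot>\<^sub>m ?c (Rs ! (d - 1))) * prodP n \<mu> (map ?c ys) = prodP n \<mu> (map ?c Rs)"
    by (subst (2) Rs) (simp add: prodP_snoc)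
  finally show ?thesis .
qed

theorem proposition2p3:
  fixes n d r s :: nat and BJ :: "real mat" and Bs Bs' :: "real mat list"
  assumes "is_splitting n BJ Bs" and "length Bs = d"
    and "is_splitting n BJ Bs'" and "length Bs' = d + 1"
    and "r \<le> d - 1" and "s \<le> d"
    and "\<forall>p < d - 1. (cshift ^^ s) Bs' ! p = (cshift ^^ r) Bs ! p"
    and "is_splitting n ((cshift ^^ r) Bs ! (d - 1)) [(cshift ^^ s) Bs' ! (d - 1), (cshift ^^ s) Bs' ! d]"
    and "(cshift ^^ s) Bs' ! d * (cshift ^^ s) Bs' ! (d - 1) = 0\<^sub>m n n"
  shows "nonzero_eigenvalues (iter_mat n Bs) = nonzero_eigenvalues (iter_mat n Bs')"
proof -
  note F = splitting_facts[OF assms(1)] and F' = splitting_facts[OF assms(3)]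
  have ne: "Bs \<noteq> []" "Bs' \<noteq> []" using F(1) F'(1) by auto
  let ?c = "map_mat complex_of_real"
  have cC: "set (map ?c Bs) \<subseteq> carrier_mat n n" "set (map ?c Bs') \<subseteq> carrier_mat n n"
    using F(2) F'(2) by auto
  have neC: "map ?c Bs \<noteq> []" "map ?c Bs' \<noteq> []" using ne by auto
  have P: "prodP n \<mu> (map ?c ((cshift ^^ s) Bs')) = prodP n \<mu> (map ?c ((cshift ^^ r) Bs))" for \<mu>
  proof (rule prodP_eq[where d=d])
    show "1 \<le> d" using F(1) assms(2) by simp
    show "length ((cshift ^^ r) Bs) = d" using cshift_pow_props[OF ne(1)] assms(2) by simp
    show "length ((cshift ^^ s) Bs') = d + 1" using cshift_pow_props[OF ne(2)] assms(4) by simp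
    show "set ((cshift ^^ r) Bs) \<subseteq> carrier_mat n n" using cshift_pow_props[OF ne(1)] F(2) by simp
    show "set ((cshift ^^ s) Bs') \<subseteq> carrier_mat n n" using cshift_pow_props[OF ne(2)] F'(2) by simp
    show "\<forall>p < d - 1. (cshift ^^ s) Bs' ! p = (cshift ^^ r) Bs ! p" by (rule assms(7))
    show "is_splitting n ((cshift ^^ r) Bs ! (d - 1)) [(cshift ^^ s) Bs' ! (d - 1), (cshift ^^ s) Bs' ! d]" by (rule assms(8))
    show "(cshift ^^ s) Bs' ! d * (cshift ^^ s) Bs' ! (d - 1) = 0\<^sub>m n n" by (rule assms(9))
  qed
  show ?thesis
  proof (rule Set.set_eqI)
    fix l
    show "l \<in> nonzero_eigenvalues (iter_mat n Bs) \<longleftrightarrow> l \<in> nonzero_eigenvalues (iter_mat n Bs')"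
    proof (cases "l = 0")
      case True then show ?thesis by (simp add: nonzero_eigenvalues_def)
    next
      case l: False
      show ?thesis
      proof (cases "l = 1")
        case True then show ?thesis using charac[OF assms(1) l] charac[OF assms(3) l] by simp
      next
        case False
        let ?\<mu> = "(l - 1) / l"
        have "eigenvalue (prodP n ?\<mu> (map ?c Bs)) l \<longleftrightarrow> eigenvalue (prodP n ?\<mu> (map ?c ((cshift ^^ r) Bs))) l"
          using eig_cshift_pow[OF cC(1) neC(1) l, of ?\<mu> r] unfolding cshift_pow_map[OF ne(1), of r ?c] by (rule sym)
        also have "\<dots> \<longleftrightarrow> eigenvalue (prodP n ?\<mu> (map ?c ((cshift ^^ s) Bs'))) l" using P by simp
        also have "\<dots> \<longleftrightarrow> eigenvalue (prodP n ?\<mu> (map ?c Bs')) l"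
          using eig_cshift_pow[OF cC(2) neC(2) l, of ?\<mu> s] unfolding cshift_pow_map[OF ne(2), of s ?c] .
        finally show ?thesis using charac[OF assms(1) l] charac[OF assms(3) l] False by simp
      qed
    qed
  qed
qed

end
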